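(* There exists a change of section $g$ such that $\sum_{j=1}^p {}^gm_{i,j}=m$ for every $i\in\{1,\dots,p\}$ (such $g$ are called appropriate). Moreover the appropriate $g$-changed process is unique: if $g_1,g_2$ are appropriate changes of section then ${}^{g_1}\mu_{i,j}={}^{g_2}\mu_{i,j}$ for all $i,j$.
   Context: Fix integers $d,p\ge 1$. Let $(Z_n)=(A_n,M_n)$ be a Markov-additive process on $\mathbb{Z}^d\times\{1,\dots,p\}$ (a Markov chain with $\mathbb{P}_{(x,i)}((A_1,M_1)=(x',i'))=\mathbb{P}_{(0,i)}((A_1,M_1)=(x'-x,i'))$), with jump matrix $\mu_{i,j}(x)=\mathbb{P}_{(0,i)}((A_1,M_1)=(x,j))$, assumed irreducible, aperiodic (for every state, the gcd of possible return times is $1$), with finite exponential moments ($\sum_xe^{\alpha\|x\|}\mu_{i,j}(x)<\infty$ for all $\alpha>0$). The matrix $\big(\sum_x\mu_{i,j}(x)\big)_{i,j}$ is the transition matrix of $(M_n)$, with unique stationary distribution $\pi$. Local drifts $m_{i,j}=\sum_x x\mu_{i,j}(x)$, global drift $m=\sum_{i,j}\pi_im_{i,j}$. A change of section is a real $p\times d$ matrix $g$ with rows $g_1,\dots,g_p$; the $g$-changed process has jump measures ${}^g\mu_{i,j}(x)=\mu_{i,j}(x+g_j-g_i)$, $x\in\mathbb{R}^d$, and local drifts ${}^gm_{i,j}=\sum_{x\in\mathbb{R}^d}x\,{}^g\mu_{i,j}(x)$. *)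

theory Defs
  imports "HOL-Analysis.Analysis"
begin

text \<open>Jump kernels are functions mu i j :: real^'d => real, supported on the lattice Z^d
  (points with all coordinates integer). The modulating states {1..p} are a finite type 'p,
  and the dimension d is the finite index type 'd.\<close>

definition lattice :: "(real^'d) set" where
  "lattice = {x. \<forall>k. x $ k \<in> \<int>}"

definition MAP_kernel :: "('p::finite \<Rightarrow> 'p \<Rightarrow> real^'d \<Rightarrow> real) \<Rightarrow> bool" where
  "MAP_kernel \<mu> \<longleftrightarrow>
     (\<forall>i j x. 0 \<le> \<mu> i j x) \<and>
     (\<forall>i j x. x \<notin> lattice \<longrightarrow> \<mu> i j x = 0) \<and>
     (\<forall>i j. \<mu> i j summable_on UNIV) \<and>
     (\<forall>i. (\<Sum>j\<in>UNIV. infsum (\<mu> i j) UNIV) = 1)"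

definition exp_moments :: "('p::finite \<Rightarrow> 'p \<Rightarrow> real^'d \<Rightarrow> real) \<Rightarrow> bool" where
  "exp_moments \<mu> \<longleftrightarrow>
     (\<forall>\<alpha>>0. \<forall>i j. (\<lambda>x. exp (\<alpha> * norm x) * \<mu> i j x) summable_on UNIV)"

text \<open>Possible n-step transitions of the chain Z_n = (A_n, M_n): there is a path of n jumps
  each having positive probability (equivalently, the n-step transition probability is > 0).\<close>
inductive steps :: "('p \<Rightarrow> 'p \<Rightarrow> real^'d \<Rightarrow> real) \<Rightarrow> nat \<Rightarrow> ((real^'d) \<times> 'p) \<Rightarrow> ((real^'d) \<times> 'p) \<Rightarrow> bool"
  for \<mu> where
  steps_0: "steps \<mu> 0 s s"
| steps_Suc: "steps \<mu> n s (y, k) \<Longrightarrow> 0 < \<mu> k j (z - y) \<Longrightarrow> steps \<mu> (Suc n) s (z, j)"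

definition irreducible_MAP :: "('p::finite \<Rightarrow> 'p \<Rightarrow> real^'d \<Rightarrow> real) \<Rightarrow> bool" where
  "irreducible_MAP \<mu> \<longleftrightarrow>
     (\<forall>x i y j. x \<in> lattice \<longrightarrow> y \<in> lattice \<longrightarrow> (\<exists>n. steps \<mu> n (x, i) (y, j)))"

definition aperiodic_MAP :: "('p::finite \<Rightarrow> 'p \<Rightarrow> real^'d \<Rightarrow> real) \<Rightarrow> bool" where
  "aperiodic_MAP \<mu> \<longleftrightarrow>
     (\<forall>x i. x \<in> lattice \<longrightarrow> Gcd {n. 0 < n \<and> steps \<mu> n (x, i) (x, i)} = (1::nat))"

definition trans_mat :: "('p \<Rightarrow> 'p \<Rightarrow> real^'d \<Rightarrow> real) \<Rightarrow> 'p \<Rightarrow> 'p \<Rightarrow> real" where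
  "trans_mat \<mu> i j = infsum (\<mu> i j) UNIV"

definition stationary :: "('p::finite \<Rightarrow> 'p \<Rightarrow> real^'d \<Rightarrow> real) \<Rightarrow> ('p \<Rightarrow> real) \<Rightarrow> bool" where
  "stationary \<mu> \<pi> \<longleftrightarrow> (\<forall>i. 0 \<le> \<pi> i) \<and> (\<Sum>i\<in>UNIV. \<pi> i) = 1 \<and>
     (\<forall>j. (\<Sum>i\<in>UNIV. \<pi> i * trans_mat \<mu> i j) = \<pi> j)"

definition local_drift :: "('p \<Rightarrow> 'p \<Rightarrow> real^'d \<Rightarrow> real) \<Rightarrow> 'p \<Rightarrow> 'p \<Rightarrow> real^'d" where
  "local_drift \<mu> i j = infsum (\<lambda>x. \<mu> i j x *\<^sub>R x) UNIV"

definition global_drift :: "('p::finite \<Rightarrow> 'p \<Rightarrow> real^'d \<Rightarrow> real) \<Rightarrow> ('p \<Rightarrow> real) \<Rightarrow> real^'d" where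
  "global_drift \<mu> \<pi> = (\<Sum>i\<in>UNIV. \<Sum>j\<in>UNIV. \<pi> i *\<^sub>R local_drift \<mu> i j)"

definition changed :: "('p \<Rightarrow> real^'d) \<Rightarrow> ('p \<Rightarrow> 'p \<Rightarrow> real^'d \<Rightarrow> real) \<Rightarrow> 'p \<Rightarrow> 'p \<Rightarrow> real^'d \<Rightarrow> real" where
  "changed g \<mu> i j x = \<mu> i j (x + g j - g i)"

definition appropriate :: "('p::finite \<Rightarrow> 'p \<Rightarrow> real^'d \<Rightarrow> real) \<Rightarrow> ('p \<Rightarrow> real) \<Rightarrow> ('p \<Rightarrow> real^'d) \<Rightarrow> bool" where
  "appropriate \<mu> \<pi> g \<longleftrightarrow>
     (\<forall>i. (\<Sum>j\<in>UNIV. local_drift (changed g \<mu>) i j) = global_drift \<mu> \<pi>)"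

end

theory Submission
  imports Defs
begin

lemma P_nonneg: "MAP_kernel \<mu> \<Longrightarrow> 0 \<le> trans_mat \<mu> i j"
  unfolding MAP_kernel_def trans_mat_def by (simp add: infsum_nonneg)

lemma P_row: "MAP_kernel \<mu> \<Longrightarrow> (\<Sum>j\<in>UNIV. trans_mat \<mu> i j) = 1"
  unfolding MAP_kernel_def trans_mat_def by simp

lemma P_pos:
  assumes "MAP_kernel \<mu>" "0 < \<mu> i j x"
  shows "0 < trans_mat \<mu> i j"
proof -
  have s: "\<mu> i j summable_on UNIV" and nn: "\<And>y. 0 \<le> \<mu> i j y"
    using assms(1) unfolding MAP_kernel_def by auto
  have "infsum (\<mu> i j) {x} \<le> infsum (\<mu> i j) UNIV"
    by (rule infsum_mono_neutral) (use s nn in auto)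
  then show ?thesis using assms(2) unfolding trans_mat_def by simp
qed

lemma steps_closed:
  assumes "steps \<mu> n s t" "MAP_kernel \<mu>" "snd s \<in> S"
    and "\<And>a b. a \<in> S \<Longrightarrow> 0 < trans_mat \<mu> a b \<Longrightarrow> b \<in> S"
  shows "snd t \<in> S"
  using assms
proof (induction rule: steps.induct)
  case (steps_0 s)
  then show ?case by simp
next
  case (steps_Suc n s y k j z)
  then show ?case using P_pos[OF steps_Suc(4,2)] by auto
qed

lemma max_principle:
  fixes \<mu> :: "'p::finite \<Rightarrow> 'p \<Rightarrow> real^'d \<Rightarrow> real" and h :: "'p \<Rightarrow> real"
  assumes K: "MAP_kernel \<mu>" and I: "irreducible_MAP \<mu>"
    and hh: "\<And>i. h i = (\<Sum>j\<in>UNIV. trans_mat \<mu> i j * h j)"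
  shows "h i = h j"
proof -
  define M where "M = Max (range h)"
  have "M \<in> range h" unfolding M_def by (rule Max_in) auto
  then obtain i0 where i0: "h i0 = M" by auto
  have le: "h x \<le> M" for x unfolding M_def by simp
  define S where "S = {i. h i = M}"
  have cl: "b \<in> S" if "a \<in> S" "0 < trans_mat \<mu> a b" for a b
  proof -
    let ?f = "\<lambda>j. trans_mat \<mu> a j * (M - h j)"
    have e1: "sum ?f UNIV = (\<Sum>j\<in>UNIV. trans_mat \<mu> a j * M) - (\<Sum>j\<in>UNIV. trans_mat \<mu> a j * h j)"
      unfolding right_diff_distrib by (rule sum_subtractf)
    have e2: "(\<Sum>j\<in>UNIV. trans_mat \<mu> a j * M) = M"
      unfolding sum_distrib_right[symmetric] P_row[OF K] by simp
    have e3: "(\<Sum>j\<in>UNIV. trans_mat \<mu> a j * h j) = M"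
      using hh[of a] that(1) unfolding S_def by simp
    have z: "sum ?f UNIV = 0" using e1 e2 e3 by simp
    have nn: "\<And>j. j \<in> UNIV \<Longrightarrow> 0 \<le> ?f j"
      using P_nonneg[OF K] le by simp
    have "?f b = 0"
      using sum_nonneg_eq_0_iff[of UNIV ?f, OF finite[of UNIV] nn] z by blast
    then show ?thesis using that(2) by (simp add: S_def)
  qed
  have "x \<in> S" for x
  proof -
    have "(0::real^'d) \<in> lattice" unfolding lattice_def by simp
    then obtain n where "steps \<mu> n (0, i0) (0, x)" using I unfolding irreducible_MAP_def by blast
    from steps_closed[OF this K _ cl] i0 show ?thesis by (simp add: S_def)
  qed
  then show ?thesis by (simp add: S_def)
qed

lemma drift_summable:
  fixes \<mu> :: "'p::finite \<Rightarrow> 'p \<Rightarrow> real^'d \<Rightarrow> real"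
  assumes K: "MAP_kernel \<mu>" and E: "exp_moments \<mu>"
  shows "(\<lambda>x. \<mu> i j x *\<^sub>R x) summable_on UNIV"
proof -
  have s: "(\<lambda>x. exp (1 * norm x) * \<mu> i j x) summable_on UNIV"
    using E[unfolded exp_moments_def, rule_format, of 1 i j] by simp
  have nn: "\<And>x. 0 \<le> \<mu> i j x" using K unfolding MAP_kernel_def by auto
  have "(\<lambda>x. norm (\<mu> i j x *\<^sub>R x)) summable_on UNIV"
  proof (rule summable_on_comparison_test[OF s])
    fix x :: "real^'d"
    have nx: "norm x \<le> exp (norm x)" using exp_ge_add_one_self[of "norm x"] by linarith
    show "norm (\<mu> i j x *\<^sub>R x) \<le> exp (1 * norm x) * \<mu> i j x"
      using mult_right_mono[OF nx nn[of x]] by (simp add: mult.commute abs_of_nonneg[OF nn[of x]])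
  qed simp
  then show ?thesis by (rule abs_summable_summable)
qed

lemma changed_drift:
  fixes \<mu> :: "'p::finite \<Rightarrow> 'p \<Rightarrow> real^'d \<Rightarrow> real"
  assumes K: "MAP_kernel \<mu>" and E: "exp_moments \<mu>"
  shows "local_drift (changed g \<mu>) i j = local_drift \<mu> i j - trans_mat \<mu> i j *\<^sub>R (g j - g i)"
proof -
  define c where "c = g j - g i"
  have s1: "(\<lambda>x. \<mu> i j x *\<^sub>R x) summable_on UNIV" by (rule drift_summable[OF K E])
  have s2: "\<mu> i j summable_on UNIV" using K unfolding MAP_kernel_def by auto
  have "local_drift (changed g \<mu>) i j = infsum (\<lambda>x. (\<lambda>y. \<mu> i j y *\<^sub>R (y - c)) (x + c)) UNIV"
    unfolding local_drift_def changed_def c_def by (simp add: add_diff_eq)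
  also have "\<dots> = infsum (\<lambda>y. \<mu> i j y *\<^sub>R (y - c)) UNIV"
    by (rule infsum_reindex_bij_betw) (rule bij_betw_byWitness[where f'="\<lambda>y. y - c"], auto simp: algebra_simps)
  also have "\<dots> = infsum (\<lambda>y. \<mu> i j y *\<^sub>R y + - (\<mu> i j y *\<^sub>R c)) UNIV"
    by (simp add: scaleR_diff_right)
  also have "\<dots> = infsum (\<lambda>y. \<mu> i j y *\<^sub>R y) UNIV + - infsum (\<lambda>y. \<mu> i j y *\<^sub>R c) UNIV"
    by (subst infsum_add) (auto simp: s1 s2 summable_on_uminus infsum_uminus intro: summable_on_scaleR_left)
  also have "infsum (\<lambda>y. \<mu> i j y *\<^sub>R c) UNIV = trans_mat \<mu> i j *\<^sub>R c"
    unfolding trans_mat_def by (rule infsum_scaleR_left) (rule s2)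
  finally show ?thesis unfolding local_drift_def c_def by simp
qed


lemma solvable:
  fixes \<mu> :: "'p::finite \<Rightarrow> 'p \<Rightarrow> real^'d \<Rightarrow> real" and c :: "'p \<Rightarrow> real"
  assumes K: "MAP_kernel \<mu>" and I: "irreducible_MAP \<mu>" and S: "stationary \<mu> \<pi>"
    and c0: "(\<Sum>i\<in>UNIV. \<pi> i * c i) = 0"
  shows "\<exists>v::real^'p. \<forall>i. v $ i - (\<Sum>j\<in>UNIV. trans_mat \<mu> i j * v $ j) = c i"
proof -
  define L where "L = (\<lambda>v::real^'p. \<chi> i. v $ i - (\<Sum>j\<in>UNIV. trans_mat \<mu> i j * v $ j))"
  have lin: "linear L"
    unfolding L_def
  proof (rule linearI)
    fix x y :: "real^'p" and r :: real
    show "(\<chi> i. (x + y) $ i - (\<Sum>j\<in>UNIV. trans_mat \<mu> i j * (x + y) $ j)) =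
      (\<chi> i. x $ i - (\<Sum>j\<in>UNIV. trans_mat \<mu> i j * x $ j)) + (\<chi> i. y $ i - (\<Sum>j\<in>UNIV. trans_mat \<mu> i j * y $ j))"
      by (simp add: vec_eq_iff distrib_left sum.distrib)
    show "(\<chi> i. (r *\<^sub>R x) $ i - (\<Sum>j\<in>UNIV. trans_mat \<mu> i j * (r *\<^sub>R x) $ j)) =
      r *\<^sub>R (\<chi> i. x $ i - (\<Sum>j\<in>UNIV. trans_mat \<mu> i j * x $ j))"
      by (simp add: vec_eq_iff sum_distrib_left right_diff_distrib mult.left_commute)
  qed
  define i0 :: 'p where "i0 = undefined"
  define U where "U = {v::real^'p. axis i0 1 \<bullet> v = 0}"
  define pv where "pv = ((\<chi> i. \<pi> i) :: real^'p)"
  define H where "H = {v::real^'p. pv \<bullet> v = 0}"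
  have pv0: "pv \<noteq> 0"
  proof
    assume "pv = 0"
    then have "pv $ i = 0" for i by simp
    then have "\<pi> i = 0" for i unfolding pv_def by simp
    then show False using S unfolding stationary_def by simp
  qed
  have subU: "subspace U" unfolding U_def by (rule subspace_hyperplane)
  have subH: "subspace H" unfolding H_def by (rule subspace_hyperplane)
  have ker: "v = 0" if "L v = 0" "v \<in> U" for v
  proof -
    have hv: "v $ i = (\<Sum>j\<in>UNIV. trans_mat \<mu> i j * v $ j)" for i
    proof -
      have "L v $ i = 0" using that(1) by simp
      then have "v $ i - (\<Sum>j\<in>UNIV. trans_mat \<mu> i j * v $ j) = 0" unfolding L_def by (simp only: vec_lambda_beta)
      then show ?thesis by (simp only: right_minus_eq)
    qed
    have "v $ i = v $ j" for i j
      using max_principle[OF K I, of "\<lambda>i. v $ i", OF hv] .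
    moreover have "v $ i0 = 0" using that(2) unfolding U_def by (simp add: inner_axis')
    ultimately have "v $ i = 0 $ i" for i by (metis zero_index)
    then show ?thesis by (simp add: vec_eq_iff)
  qed
  have inj: "inj_on L (span U)"
    unfolding span_eq_iff[THEN iffD2, OF subU]
  proof (rule inj_onI)
    fix v w assume "v \<in> U" "w \<in> U" "L v = L w"
    then have "L (v - w) = 0" "v - w \<in> U"
      using linear_diff[OF lin] subspace_diff[OF subU] by auto
    then have "v - w = 0" by (rule ker)
    then show "v = w" by simp
  qed
  have dimU: "dim (L ` U) = dim U" by (rule dim_image_eq[OF lin inj])
  have "dim U = DIM(real^'p) - 1" unfolding U_def by (rule dim_hyperplane) simp
  moreover have "dim H = DIM(real^'p) - 1" unfolding H_def by (rule dim_hyperplane[OF pv0])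
  ultimately have dimeq: "dim (L ` U) = dim H" using dimU by simp
  have img: "L ` U \<subseteq> H"
  proof
    fix y assume "y \<in> L ` U"
    then obtain v where y: "y = L v" by auto
    have "pv \<bullet> L v = (\<Sum>i\<in>UNIV. \<pi> i * v $ i) - (\<Sum>i\<in>UNIV. \<Sum>j\<in>UNIV. \<pi> i * trans_mat \<mu> i j * v $ j)"
      unfolding L_def pv_def inner_vec_def
      by (simp add: right_diff_distrib sum_subtractf sum_distrib_left mult.assoc)
    also have "(\<Sum>i\<in>UNIV. \<Sum>j\<in>UNIV. \<pi> i * trans_mat \<mu> i j * v $ j) = (\<Sum>j\<in>UNIV. (\<Sum>i\<in>UNIV. \<pi> i * trans_mat \<mu> i j) * v $ j)"
      by (subst sum.swap) (simp add: sum_distrib_right)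
    also have "\<dots> = (\<Sum>j\<in>UNIV. \<pi> j * v $ j)"
      using S unfolding stationary_def by simp
    finally show "y \<in> H" unfolding H_def y by simp
  qed
  have "L ` U = H"
    by (rule subspace_dim_equal[OF linear_subspace_image[OF lin subU] subH img]) (simp add: dimeq)
  moreover have "(\<chi> i. c i) \<in> H" unfolding H_def pv_def inner_vec_def using c0 by simp
  ultimately obtain v where "L v = (\<chi> i. c i)" by auto
  then show ?thesis unfolding L_def by (auto simp: vec_eq_iff)
qed



lemma sum_changed:
  fixes \<mu> :: "'p::finite \<Rightarrow> 'p \<Rightarrow> real^'d \<Rightarrow> real"
  assumes K: "MAP_kernel \<mu>" and E: "exp_moments \<mu>"
  shows "(\<Sum>j\<in>UNIV. local_drift (changed g \<mu>) i j) =
    (\<Sum>j\<in>UNIV. local_drift \<mu> i j) - (\<Sum>j\<in>UNIV. trans_mat \<mu> i j *\<^sub>R g j) + g i"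
proof -
  have "(\<Sum>j\<in>UNIV. local_drift (changed g \<mu>) i j) =
     (\<Sum>j\<in>UNIV. local_drift \<mu> i j) - (\<Sum>j\<in>UNIV. trans_mat \<mu> i j *\<^sub>R g j) + (\<Sum>j\<in>UNIV. trans_mat \<mu> i j *\<^sub>R g i)"
    by (simp only: changed_drift[OF K E] scaleR_diff_right sum_subtractf diff_diff_eq2 sum.distrib) (simp add: algebra_simps)
  also have "(\<Sum>j\<in>UNIV. trans_mat \<mu> i j *\<^sub>R g i) = g i"
    using P_row[OF K, of i] by (simp only: scaleR_left.sum[symmetric]) simp
  finally show ?thesis .
qed

theorem proposition2p6:
  fixes \<mu> :: "'p::finite \<Rightarrow> 'p \<Rightarrow> real^'d \<Rightarrow> real"
    and \<pi> :: "'p \<Rightarrow> real"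
  assumes "MAP_kernel \<mu>"
    and "irreducible_MAP \<mu>"
    and "aperiodic_MAP \<mu>"
    and "exp_moments \<mu>"
    and "stationary \<mu> \<pi>"
  shows "(\<exists>g. appropriate \<mu> \<pi> g) \<and>
         (\<forall>g1 g2. appropriate \<mu> \<pi> g1 \<longrightarrow> appropriate \<mu> \<pi> g2 \<longrightarrow>
             (\<forall>i j. changed g1 \<mu> i j = changed g2 \<mu> i j))"
proof -
  note K = assms(1) and I = assms(2) and E = assms(4) and S = assms(5)
  define r where "r = (\<lambda>i. \<Sum>j\<in>UNIV. local_drift \<mu> i j)"
  define m where "m = global_drift \<mu> \<pi>"
  define Pg where "Pg = (\<lambda>g::'p \<Rightarrow> real^'d. \<lambda>i. \<Sum>j\<in>UNIV. trans_mat \<mu> i j *\<^sub>R g j)"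
  have app: "appropriate \<mu> \<pi> g \<longleftrightarrow> (\<forall>i. g i - Pg g i = m - r i)" for g
    unfolding appropriate_def sum_changed[OF K E] r_def m_def Pg_def
    by (auto simp: algebra_simps)
  have mr: "m = (\<Sum>i\<in>UNIV. \<pi> i *\<^sub>R r i)"
    unfolding m_def global_drift_def r_def by (simp add: scaleR_sum_right)
  have pisum: "(\<Sum>i\<in>UNIV. \<pi> i) = 1" using S unfolding stationary_def by simp
  have ex: "\<exists>g. appropriate \<mu> \<pi> g"
  proof -
    have "\<forall>k. \<exists>v::real^'p. \<forall>i. v $ i - (\<Sum>j\<in>UNIV. trans_mat \<mu> i j * v $ j) = (m - r i) $ k"
    proof
      fix k
      have "(\<Sum>i\<in>UNIV. \<pi> i * (m - r i) $ k) = (\<Sum>i\<in>UNIV. \<pi> i) * m $ k - (\<Sum>i\<in>UNIV. \<pi> i * r i $ k)"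
        by (simp add: right_diff_distrib sum_subtractf sum_distrib_right)
      also have "\<dots> = 0" using pisum mr by (simp add: sum_component)
      finally show "\<exists>v::real^'p. \<forall>i. v $ i - (\<Sum>j\<in>UNIV. trans_mat \<mu> i j * v $ j) = (m - r i) $ k"
        by (rule solvable[OF K I S])
    qed
    then obtain V :: "'d \<Rightarrow> real^'p" where V: "\<And>k i. V k $ i - (\<Sum>j\<in>UNIV. trans_mat \<mu> i j * V k $ j) = (m - r i) $ k"
      by metis
    define g where "g = (\<lambda>i. \<chi> k. V k $ i)"
    have "g i - Pg g i = m - r i" for i
      unfolding vec_eq_iff
    proof
      fix k
      show "(g i - Pg g i) $ k = (m - r i) $ k"
        using V[of k i] unfolding g_def Pg_def by (simp add: sum_component)
    qed
    then show ?thesis using app by blast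
  qed
  have un: "changed g1 \<mu> i j = changed g2 \<mu> i j"
    if a1: "appropriate \<mu> \<pi> g1" and a2: "appropriate \<mu> \<pi> g2" for g1 g2 i j
  proof -
    define h where "h = (\<lambda>i. g1 i - g2 i)"
    have hh: "h i = Pg h i" for i
    proof -
      have "g1 i - Pg g1 i = g2 i - Pg g2 i" using a1 a2 app by auto
      then have e1: "g1 i - g2 i = Pg g1 i - Pg g2 i" by (simp add: algebra_simps)
      have e2: "Pg h i = Pg g1 i - Pg g2 i"
        unfolding Pg_def h_def by (simp add: scaleR_diff_right sum_subtractf)
      have "h i = g1 i - g2 i" by (simp add: h_def)
      with e1 e2 show ?thesis by simp
    qed
    have "h i $ k = h j $ k" for k
    proof (rule max_principle[OF K I, of "\<lambda>i. h i $ k"])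
      fix i
      show "h i $ k = (\<Sum>j\<in>UNIV. trans_mat \<mu> i j * h j $ k)"
        using arg_cong[OF hh[of i], of "\<lambda>v. v $ k"] unfolding Pg_def by (simp add: sum_component)
    qed
    then have "h i = h j" by (simp add: vec_eq_iff)
    then have d: "g1 j - g1 i = g2 j - g2 i" unfolding h_def by (simp add: algebra_simps)
    have "x + g1 j - g1 i = x + g2 j - g2 i" for x
      using d by (metis add_diff_eq)
    then show ?thesis unfolding changed_def by presburger
  qed
  show ?thesis using ex un by blast
qed
end
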